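(* Let $G$ be a twin-free unit square graph, let $\mathcal{P}$ be a clique-stable partition of $V(G)$, and let $f$ be a realization of $G$. Then: (1) For each $X\in\mathcal{P}$ there is $b\in\{-1,1\}$ such that for all $v,w\in X$: $f(v)_1\le f(w)_1 \iff b\,f(v)_2\le b\,f(w)_2$. Call such $b$ the orientation $\mathrm{ori}_{G,f}(X)$ (it is unique if $|X|\ge2$; set $\mathrm{ori}_{G,f}(X)=1$ if $|X|=1$). (2) If $X,Y\in\mathcal{P}$ with $\mathrm{ori}_{G,f}(X)\ne\mathrm{ori}_{G,f}(Y)$, then either $xy\in E(G)$ for all $x\in X,y\in Y$, or $xy\notin E(G)$ for all $x\in X,y\in Y$. (3) Let $X\ne Y\in\mathcal{P}$ with $\mathrm{ori}_{G,f}(X)=\mathrm{ori}_{G,f}(Y)$ and let $k=|\{(x,y)\in X\times Y\mid xy\in E(G)\}|\ge1$. Write $X=\{x_1,\dots,x_s\}$ with $f(x_i)_1\le f(x_{i+1})_1$ for all $i<s$ and $Y=\{y_1,\dots,y_t\}$ with $f(y_j)_1\le f(y_{j+1})_1$ for all $j<t$. Then for all $i\in[s],j\in[t]$: $x_iy_j\in E(G)\iff \lceil it/k\rceil=\lceil js/k\rceil$.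
   Context: A realization of $G$ is $f\colon V(G)\to\mathbb{R}^2$ with $vw\in E(G)$ iff $\|f(v)-f(w)\|_\infty\le1$ for distinct $v,w$; a unit square graph is a graph with a realization. $G$ is twin-free if there are no distinct $v,w$ with $N[v]=N[w]$. $\mathcal{M}(G)$ is the set of maximal cliques. $G^*_{\mathcal{M}}$ is the graph on $V(G)\sqcup\mathcal{M}(G)$ with edge set $E(G)\cup\{vC\mid C\in\mathcal{M}(G),v\in C\}$. A partition $\mathcal{Q}$ of the vertex set of a graph $H$ is stable if for all $X,Y\in\mathcal{Q}$ and $v,w\in X$, $|N_H(v)\cap Y|=|N_H(w)\cap Y|$. A partition $\mathcal{P}$ of $V(G)$ into cliques is clique-stable if, letting $\mathcal{P}^*$ be the coarsest partition of $V(G)\cup\mathcal{M}(G)$ that is stable with respect to $G^*_{\mathcal{M}}$ and refines $\mathcal{P}\cup\{\mathcal{M}(G)\}$, one has $\{Z\in\mathcal{P}^*\mid Z\subseteq V(G)\}=\mathcal{P}$. *)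

theory Defs
  imports Complex_Main "HOL-Library.Disjoint_Sets"
begin

definition fin_graph :: "'v set \<Rightarrow> ('v \<times> 'v) set \<Rightarrow> bool" where
  "fin_graph V E \<longleftrightarrow> finite V \<and> E \<subseteq> V \<times> V \<and> sym E \<and> irrefl E"

definition dist_inf :: "real \<times> real \<Rightarrow> real \<times> real \<Rightarrow> real" where
  "dist_inf p q = max \<bar>fst p - fst q\<bar> \<bar>snd p - snd q\<bar>"

definition realization :: "'v set \<Rightarrow> ('v \<times> 'v) set \<Rightarrow> ('v \<Rightarrow> real \<times> real) \<Rightarrow> bool" where
  "realization V E f \<longleftrightarrow>
     (\<forall>v\<in>V. \<forall>w\<in>V. v \<noteq> w \<longrightarrow> ((v, w) \<in> E \<longleftrightarrow> dist_inf (f v) (f w) \<le> 1))"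

definition unit_square_graph :: "'v set \<Rightarrow> ('v \<times> 'v) set \<Rightarrow> bool" where
  "unit_square_graph V E \<longleftrightarrow> (\<exists>f. realization V E f)"

definition closed_nbhd :: "'v set \<Rightarrow> ('v \<times> 'v) set \<Rightarrow> 'v \<Rightarrow> 'v set" where
  "closed_nbhd V E v = insert v {w \<in> V. (v, w) \<in> E}"

definition twin_free :: "'v set \<Rightarrow> ('v \<times> 'v) set \<Rightarrow> bool" where
  "twin_free V E \<longleftrightarrow> (\<forall>v\<in>V. \<forall>w\<in>V. v \<noteq> w \<longrightarrow> closed_nbhd V E v \<noteq> closed_nbhd V E w)"

definition is_clique :: "'v set \<Rightarrow> ('v \<times> 'v) set \<Rightarrow> 'v set \<Rightarrow> bool" where
  "is_clique V E C \<longleftrightarrow> C \<subseteq> V \<and> (\<forall>v\<in>C. \<forall>w\<in>C. v \<noteq> w \<longrightarrow> (v, w) \<in> E)"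

definition max_cliques :: "'v set \<Rightarrow> ('v \<times> 'v) set \<Rightarrow> 'v set set" where
  "max_cliques V E = {C. is_clique V E C \<and> (\<forall>D. is_clique V E D \<and> C \<subseteq> D \<longrightarrow> D = C)}"

definition star_vertices :: "'v set \<Rightarrow> ('v \<times> 'v) set \<Rightarrow> ('v + 'v set) set" where
  "star_vertices V E = Inl ` V \<union> Inr ` max_cliques V E"

definition star_edges :: "'v set \<Rightarrow> ('v \<times> 'v) set \<Rightarrow> (('v + 'v set) \<times> ('v + 'v set)) set" where
  "star_edges V E =
     {(Inl v, Inl w) | v w. (v, w) \<in> E}
     \<union> {(Inl v, Inr C) | v C. C \<in> max_cliques V E \<and> v \<in> C}
     \<union> {(Inr C, Inl v) | v C. C \<in> max_cliques V E \<and> v \<in> C}"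

definition is_partition :: "'a set set \<Rightarrow> 'a set \<Rightarrow> bool" where
  "is_partition Q S \<longleftrightarrow> (\<forall>X\<in>Q. X \<noteq> {}) \<and> disjoint Q \<and> \<Union>Q = S"

definition refines :: "'a set set \<Rightarrow> 'a set set \<Rightarrow> bool" where
  "refines Q R \<longleftrightarrow> (\<forall>X\<in>Q. \<exists>Y\<in>R. X \<subseteq> Y)"

definition stable_partition :: "'a set \<Rightarrow> ('a \<times> 'a) set \<Rightarrow> 'a set set \<Rightarrow> bool" where
  "stable_partition W F Q \<longleftrightarrow> is_partition Q W \<and>
     (\<forall>X\<in>Q. \<forall>Y\<in>Q. \<forall>v\<in>X. \<forall>w\<in>X.
        card {u \<in> Y. (v, u) \<in> F} = card {u \<in> Y. (w, u) \<in> F})"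

definition coarsest_stable_refinement :: "'a set \<Rightarrow> ('a \<times> 'a) set \<Rightarrow> 'a set set \<Rightarrow> 'a set set \<Rightarrow> bool" where
  "coarsest_stable_refinement W F R Q \<longleftrightarrow>
     stable_partition W F Q \<and> refines Q R \<and>
     (\<forall>Q'. stable_partition W F Q' \<and> refines Q' R \<longrightarrow> refines Q' Q)"

definition clique_stable :: "'v set \<Rightarrow> ('v \<times> 'v) set \<Rightarrow> 'v set set \<Rightarrow> bool" where
  "clique_stable V E P \<longleftrightarrow>
     is_partition P V \<and> (\<forall>X\<in>P. is_clique V E X) \<and>
     (\<forall>Pstar. coarsest_stable_refinement (star_vertices V E) (star_edges V E)
                 ((\<lambda>X. Inl ` X) ` P \<union> {Inr ` max_cliques V E}) Pstar
        \<longrightarrow> {Z \<in> Pstar. Z \<subseteq> Inl ` V} = (\<lambda>X. Inl ` X) ` P)"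

definition oriented :: "('v \<Rightarrow> real \<times> real) \<Rightarrow> 'v set \<Rightarrow> real \<Rightarrow> bool" where
  "oriented f X b \<longleftrightarrow> b \<in> {-1, 1} \<and>
     (\<forall>v\<in>X. \<forall>w\<in>X. fst (f v) \<le> fst (f w) \<longleftrightarrow> b * snd (f v) \<le> b * snd (f w))"

definition ori :: "('v \<Rightarrow> real \<times> real) \<Rightarrow> 'v set \<Rightarrow> real" where
  "ori f X = (if card X = 1 then 1 else (THE b. oriented f X b))"

end

theory Submission
  imports Defs
begin


definition relQ :: "'a set set \<Rightarrow> ('a \<times> 'a) set" where
  "relQ Q = {(x,y). \<exists>X\<in>Q. x\<in>X \<and> y\<in>X}"

lemma csr_exists:
  assumes finW: "finite W" and disjR: "disjoint R" and covR: "W \<subseteq> \<Union>R"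
  shows "\<exists>Q. coarsest_stable_refinement W F R Q"
proof -
  define S where "S = {Q. stable_partition W F Q \<and> refines Q R}"
  define T where "T = (\<Union>Q\<in>S. relQ Q)\<^sup>+"
  define D where "D = (\<lambda>x. {x}) ` W"
  have DS: "D \<in> S"
  proof -
    have "is_partition D W" unfolding is_partition_def D_def disjoint_def by auto
    moreover have "refines D R" unfolding refines_def D_def using covR by auto
    ultimately show ?thesis unfolding S_def stable_partition_def D_def by auto
  qed
  have Ssub: "\<And>Q X. Q \<in> S \<Longrightarrow> X \<in> Q \<Longrightarrow> X \<subseteq> W"
    unfolding S_def stable_partition_def is_partition_def by auto
  have relsub: "(\<Union>Q\<in>S. relQ Q) \<subseteq> W \<times> W"
    unfolding relQ_def using Ssub by blast
  have Tsub: "T \<subseteq> W \<times> W" unfolding T_def using relsub trancl_subset_Sigma by blast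
  have Trefl: "\<And>x. x \<in> W \<Longrightarrow> (x,x) \<in> T"
  proof -
    fix x assume "x \<in> W"
    hence "(x,x) \<in> relQ D" unfolding relQ_def D_def by auto
    thus "(x,x) \<in> T" unfolding T_def using DS by blast
  qed
  have symU: "sym (\<Union>Q\<in>S. relQ Q)" unfolding sym_def relQ_def by blast
  have eqT: "equiv W T"
    unfolding equiv_def refl_on_def T_def
    using Tsub Trefl symU sym_trancl trans_trancl unfolding T_def by blast
  define Pst where "Pst = W // T"
  have part: "is_partition Pst W"
    unfolding is_partition_def Pst_def disjoint_def
    using eqT Union_quotient in_quotient_imp_non_empty quotient_disj
    by (metis disjnt_def pairwise_def)
  have ref: "refines Pst R"
  proof -
    have key: "\<forall>Y\<in>R. a \<in> Y \<longrightarrow> b \<in> Y" if "(a,b) \<in> T" for a b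
      using that unfolding T_def
    proof (induction rule: trancl_induct)
      case (base y)
      then obtain Q X where Q: "Q \<in> S" "X \<in> Q" "a \<in> X" "y \<in> X" unfolding relQ_def by blast
      then obtain Y' where "Y' \<in> R" "X \<subseteq> Y'" unfolding S_def refines_def by blast
      then show ?case using Q disjR unfolding disjoint_def disjnt_def pairwise_def by blast
    next
      case (step y z)
      then obtain Q X where Q: "Q \<in> S" "X \<in> Q" "y \<in> X" "z \<in> X" unfolding relQ_def by blast
      then obtain Y' where "Y' \<in> R" "X \<subseteq> Y'" unfolding S_def refines_def by blast
      then show ?case using Q step disjR unfolding disjoint_def disjnt_def pairwise_def by blast
    qed
    show ?thesis unfolding refines_def Pst_def
    proof
      fix A assume "A \<in> W // T"
      then obtain x where x: "x \<in> W" "A = T `` {x}" by (auto elim: quotientE)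
      then obtain Y where "Y \<in> R" "x \<in> Y" using covR by blast
      then show "\<exists>Y\<in>R. A \<subseteq> Y" using key x by blast
    qed
  qed
  have stab: "stable_partition W F Pst"
  proof -
  have gen: "card {u \<in> B. (a, u) \<in> F} = card {u \<in> B. (b, u) \<in> F}"
    if B: "B \<in> Pst" and ab: "(a,b) \<in> relQ Q" and QS: "Q \<in> S" for a b Q B
  proof -
    from ab obtain X where X: "X \<in> Q" "a \<in> X" "b \<in> X" unfolding relQ_def by blast
    define Qb where "Qb = {Y\<in>Q. Y \<inter> B \<noteq> {}}"
    have Bunion: "B = \<Union>Qb"
    proof
      show "\<Union>Qb \<subseteq> B"
      proof
        fix u assume "u \<in> \<Union>Qb"
        then obtain Y y where Y: "Y \<in> Q" "u \<in> Y" "y \<in> Y" "y \<in> B" unfolding Qb_def by blast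
        have "(y,u) \<in> T" unfolding T_def using Y QS unfolding relQ_def by blast
        moreover obtain c where "B = T `` {c}" using B unfolding Pst_def by (auto elim: quotientE)
        ultimately show "u \<in> B" using Y(4) eqT unfolding equiv_def trans_def by blast
      qed
      show "B \<subseteq> \<Union>Qb"
      proof
        fix u assume u: "u \<in> B"
        have "B \<subseteq> W" using B part unfolding is_partition_def by blast
        hence "u \<in> W" using u by blast
        moreover have "\<Union>Q = W" using QS unfolding S_def stable_partition_def is_partition_def by blast
        ultimately obtain Y where "Y \<in> Q" "u \<in> Y" by blast
        then show "u \<in> \<Union>Qb" unfolding Qb_def using u by blast
      qed
    qed
    have finQ: "finite Q"
    proof (rule finite_subset[of _ "Pow W"])
      show "Q \<subseteq> Pow W" using Ssub[OF QS] by blast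
    qed (use finW in simp)
    have finQb: "finite Qb" unfolding Qb_def using finQ by simp
    have disjQ: "disjoint Q" using QS unfolding S_def stable_partition_def is_partition_def by blast
    have cardeq: "card {u \<in> B. (x, u) \<in> F} = (\<Sum>Y\<in>Qb. card {u \<in> Y. (x, u) \<in> F})" for x
    proof -
      have "{u \<in> B. (x, u) \<in> F} = (\<Union>Y\<in>Qb. {u \<in> Y. (x, u) \<in> F})" using Bunion by blast
      moreover have h1: "\<forall>Y\<in>Qb. finite {u \<in> Y. (x, u) \<in> F}"
      proof
        fix Y assume "Y \<in> Qb"
        hence "{u \<in> Y. (x, u) \<in> F} \<subseteq> W" using Ssub[OF QS] unfolding Qb_def by blast
        thus "finite {u \<in> Y. (x, u) \<in> F}" using finW by (rule finite_subset)
      qed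
      moreover have h2: "\<forall>Y\<in>Qb. \<forall>Z\<in>Qb. Y \<noteq> Z \<longrightarrow> {u \<in> Y. (x, u) \<in> F} \<inter> {u \<in> Z. (x, u) \<in> F} = {}"
          using disjQ unfolding Qb_def disjoint_def disjnt_def pairwise_def by blast
      ultimately show ?thesis using card_UN_disjoint[OF finQb, of "\<lambda>Y. {u \<in> Y. (x, u) \<in> F}"] by simp
    qed
    have "\<And>Y. Y \<in> Qb \<Longrightarrow> card {u \<in> Y. (a, u) \<in> F} = card {u \<in> Y. (b, u) \<in> F}"
      using QS X unfolding S_def stable_partition_def Qb_def by blast
    then show ?thesis using cardeq by (metis (no_types, lifting) sum.cong)
  qed
    have "card {u \<in> B. (v, u) \<in> F} = card {u \<in> B. (w, u) \<in> F}"
      if B: "B \<in> Pst" and vw: "(v,w) \<in> T" for B v w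
      using vw unfolding T_def
    proof (induction rule: trancl_induct)
      case (base y)
      then obtain Q where Q: "Q \<in> S" "(v,y) \<in> relQ Q" by (meson UN_E)
      show ?case by (rule gen[OF B Q(2) Q(1)])
    next
      case (step y z)
      then obtain Q where Q: "Q \<in> S" "(y,z) \<in> relQ Q" by (meson UN_E)
      show ?case using step.IH gen[OF B Q(2) Q(1)] by simp
    qed
    note c1 = this
    have c2: "(v,w) \<in> T" if "A \<in> Pst" "v \<in> A" "w \<in> A" for A v w
      using that eqT unfolding Pst_def by (meson quotient_eq_iff)
    have "\<forall>X\<in>Pst. \<forall>Y\<in>Pst. \<forall>v\<in>X. \<forall>w\<in>X. card {u \<in> Y. (v, u) \<in> F} = card {u \<in> Y. (w, u) \<in> F}"
    proof (intro ballI)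
      fix X Y v w assume h: "X \<in> Pst" "Y \<in> Pst" "v \<in> X" "w \<in> X"
      show "card {u \<in> Y. (v, u) \<in> F} = card {u \<in> Y. (w, u) \<in> F}" using h(2) c2[OF h(1) h(3) h(4)] by (rule c1)
    qed
    then show ?thesis unfolding stable_partition_def using part by (intro conjI)
  qed
  have coarse: "refines Q' Pst" if "stable_partition W F Q'" "refines Q' R" for Q'
  proof -
    have QS: "Q' \<in> S" unfolding S_def using that by simp
    show ?thesis unfolding refines_def
    proof
      fix X assume X: "X \<in> Q'"
      have "is_partition Q' W" using that(1) unfolding stable_partition_def by (rule conjunct1)
      hence "X \<noteq> {}" using X unfolding is_partition_def by blast
      then obtain x where x: "x \<in> X" by blast
      have xW: "x \<in> W" using Ssub[OF QS X] x by blast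
      have "X \<subseteq> T `` {x}"
      proof
        fix y assume "y \<in> X"
        hence "(x,y) \<in> relQ Q'" unfolding relQ_def using X x by blast
        hence "(x,y) \<in> (\<Union>Q\<in>S. relQ Q)" using QS by blast
        hence "(x,y) \<in> T" unfolding T_def by (rule r_into_trancl)
        thus "y \<in> T `` {x}" by blast
      qed
      moreover have "T `` {x} \<in> Pst" unfolding Pst_def using xW by (simp add: quotientI)
      ultimately show "\<exists>Y\<in>Pst. X \<subseteq> Y" by blast
    qed
  qed
  have "coarsest_stable_refinement W F R Pst"
    unfolding coarsest_stable_refinement_def
  proof (intro conjI allI impI)
    fix Q' assume "stable_partition W F Q' \<and> refines Q' R"
    thus "refines Q' Pst" using coarse by blast
  qed (use stab ref in auto)
  thus ?thesis by blast
qed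


lemma star_edge_Inl: "((Inl v, Inl y) \<in> star_edges V E) = ((v,y) \<in> E)"
  unfolding star_edges_def by blast

lemma stab:
  assumes graph: "fin_graph V E" and cs: "clique_stable V E P"
    and XP: "X \<in> P" and YP: "Y \<in> P" and v: "v \<in> X" and w: "w \<in> X"
  shows "card {y \<in> Y. (v,y) \<in> E} = card {y \<in> Y. (w,y) \<in> E}"
proof -
  define W where "W = star_vertices V E"
  define F where "F = star_edges V E"
  define R where "R = (\<lambda>X. Inl ` X) ` P \<union> {Inr ` max_cliques V E}"
  have finV: "finite V" using graph unfolding fin_graph_def by blast
  have partP: "is_partition P V" using cs unfolding clique_stable_def by blast
  have "max_cliques V E \<subseteq> Pow V" unfolding max_cliques_def is_clique_def by blast
  hence "finite (max_cliques V E)" using finV by (meson finite_Pow_iff finite_subset)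
  hence finW: "finite W" unfolding W_def star_vertices_def using finV by blast
  have disjP: "disjoint P" using partP unfolding is_partition_def by blast
  have disjR: "disjoint R"
    unfolding R_def disjoint_def pairwise_def disjnt_def
  proof (intro ballI impI)
    fix A B assume A: "A \<in> (\<lambda>X. Inl ` X) ` P \<union> {Inr ` max_cliques V E}"
      and B: "B \<in> (\<lambda>X. Inl ` X) ` P \<union> {Inr ` max_cliques V E}" and AB: "A \<noteq> B"
    show "A \<inter> B = {}"
    proof (cases "A = Inr ` max_cliques V E")
      case True
      then show ?thesis using B AB by auto
    next
      case False
      then obtain X1 where X1: "X1 \<in> P" "A = Inl ` X1" using A by blast
      show ?thesis
      proof (cases "B = Inr ` max_cliques V E")
        case True then show ?thesis using X1 by auto
      next
        case False
        then obtain X2 where X2: "X2 \<in> P" "B = Inl ` X2" using B by blast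
        have "X1 \<noteq> X2" using X1 X2 AB by blast
        hence "X1 \<inter> X2 = {}" using disjP X1 X2 unfolding disjoint_def pairwise_def disjnt_def by blast
        then show ?thesis using X1 X2 by auto
      qed
    qed
  qed
  have covR: "W \<subseteq> \<Union>R"
    using partP unfolding W_def R_def star_vertices_def is_partition_def by blast
  obtain Pst where Pst: "coarsest_stable_refinement W F R Pst"
    using csr_exists[OF finW disjR covR] by blast
  have eq: "{Z \<in> Pst. Z \<subseteq> Inl ` V} = (\<lambda>X. Inl ` X) ` P"
    using cs Pst unfolding clique_stable_def W_def F_def R_def by blast
  have XP': "Inl ` X \<in> Pst" using eq XP by blast
  have YP': "Inl ` Y \<in> Pst" using eq YP by blast
  have st: "stable_partition W F Pst" using Pst unfolding coarsest_stable_refinement_def by (rule conjunct1)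
  have "\<forall>X\<in>Pst. \<forall>Y\<in>Pst. \<forall>v\<in>X. \<forall>w\<in>X. card {u \<in> Y. (v, u) \<in> F} = card {u \<in> Y. (w, u) \<in> F}"
    using st unfolding stable_partition_def by (rule conjunct2)
  note h = this[rule_format, OF XP' YP' imageI[OF v] imageI[OF w]]
  have eqa: "{u \<in> Inl ` Y. (Inl a, u) \<in> F} = Inl ` {y \<in> Y. (a,y) \<in> E}" for a
    unfolding F_def by (auto simp: star_edge_Inl)
  from h[unfolded eqa] show ?thesis by (simp add: card_image)
qed


lemma dist_le1: "dist_inf p q \<le> 1 \<longleftrightarrow> \<bar>fst p - fst q\<bar> \<le> 1 \<and> \<bar>snd p - snd q\<bar> \<le> 1"
  unfolding dist_inf_def by simp

definition rfl :: "real \<Rightarrow> real \<times> real \<Rightarrow> real \<times> real" where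
  "rfl b p = (fst p, b * snd p)"

lemma dist_rfl: "b \<in> {-1,1} \<Longrightarrow> dist_inf (rfl b p) (rfl b q) = dist_inf p q"
  unfolding dist_inf_def rfl_def by (auto simp: abs_minus_commute)

lemma G_tie:
  assumes "dist_inf v w \<le> 1" "dist_inf z z' \<le> 1" "dist_inf z v \<le> 1" "\<not> dist_inf z w \<le> 1"
    "dist_inf z' w \<le> 1" "\<not> dist_inf z' v \<le> 1"
  shows "fst v \<noteq> fst w \<and> snd v \<noteq> snd w"
  using assms unfolding dist_le1 by (auto simp: abs_le_iff) 

lemma G_dec_cases:
  assumes "dist_inf v w \<le> 1" "dist_inf z z' \<le> 1" "dist_inf z v \<le> 1" "\<not> dist_inf z w \<le> 1"
    "dist_inf z' w \<le> 1" "\<not> dist_inf z' v \<le> 1" "fst v < fst w" "snd w < snd v"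
  shows "(fst z' > fst v + 1 \<and> snd z > snd w + 1) \<or> (fst z < fst w - 1 \<and> snd z' < snd v - 1)"
  using assms unfolding dist_le1 by (auto simp: abs_le_iff) 

lemma G_UR:
  assumes "fst z' > fst v + 1" "snd z > snd w + 1" "dist_inf u z \<le> 1" "dist_inf u z' \<le> 1"
    "dist_inf x v \<le> 1" "dist_inf x w \<le> 1" "fst x \<le> fst x'" "snd x \<le> snd x'"
    "dist_inf x' v \<le> 1" "dist_inf x' w \<le> 1" "dist_inf u x \<le> 1"
  shows "dist_inf u x' \<le> 1"
  using assms unfolding dist_le1 by (auto simp: abs_le_iff) 

lemma G_LL:
  assumes "fst z < fst w - 1" "snd z' < snd v - 1" "dist_inf u z \<le> 1" "dist_inf u z' \<le> 1"
    "dist_inf x v \<le> 1" "dist_inf x w \<le> 1" "fst x \<le> fst x'" "snd x \<le> snd x'"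
    "dist_inf x' v \<le> 1" "dist_inf x' w \<le> 1" "dist_inf u x' \<le> 1"
  shows "dist_inf u x \<le> 1"
  using assms unfolding dist_le1 by (auto simp: abs_le_iff) 

lemma G_2K2:
  assumes b: "b \<in> {-1,1::real}"
    and "dist_inf x x' \<le> 1" "dist_inf y y' \<le> 1"
    and ox: "fst x \<le> fst x' \<longleftrightarrow> b * snd x \<le> b * snd x'"
    and ox': "fst x' \<le> fst x \<longleftrightarrow> b * snd x' \<le> b * snd x"
    and oy: "fst y \<le> fst y' \<longleftrightarrow> - b * snd y \<le> - b * snd y'"
    and oy': "fst y' \<le> fst y \<longleftrightarrow> - b * snd y' \<le> - b * snd y"
    and "dist_inf x y \<le> 1" "dist_inf x' y' \<le> 1" "\<not> dist_inf x y' \<le> 1" "\<not> dist_inf x' y \<le> 1"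
  shows False
  using b
proof
  assume "b = -1"
  then show False using assms(2-) unfolding dist_le1 by (auto simp: abs_le_iff)
next
  assume "b \<in> {1}"
  then show False using assms(2-) unfolding dist_le1 by (auto simp: abs_le_iff)
qed


lemma downclosed_card:
  assumes S: "S \<subseteq> {1..(n::nat)}" and dc: "\<forall>i i'. i \<in> S \<and> 1 \<le> i' \<and> i' \<le> i \<longrightarrow> i' \<in> S"
  shows "i \<in> S \<longleftrightarrow> 1 \<le> i \<and> i \<le> card S"
proof
  have fin: "finite S" using S finite_subset by blast
  assume i: "i \<in> S"
  hence "{1..i} \<subseteq> S" using dc by auto
  hence "card {1..i} \<le> card S" by (rule card_mono[OF fin])
  moreover have "1 \<le> i" using i S by auto
  ultimately show "1 \<le> i \<and> i \<le> card S" by simp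
next
  assume i: "1 \<le> i \<and> i \<le> card S"
  show "i \<in> S"
  proof (rule ccontr)
    assume ni: "i \<notin> S"
    have "S \<subseteq> {1..i-1}"
    proof
      fix j assume j: "j \<in> S"
      have "\<not> i \<le> j" using dc j i ni by blast
      thus "j \<in> {1..i-1}" using j S by auto
    qed
    hence "card S \<le> card {1..i-1}" by (rule card_mono[rotated]) simp
    thus False using i by (simp, linarith)
  qed
qed

lemma block:
  fixes A B :: "nat \<Rightarrow> nat \<Rightarrow> bool" and d e :: nat
  assumes d1: "d \<ge> 1" and e1: "e \<ge> 1"
    and Amono: "\<forall>i i' j j'. 1 \<le> i' \<and> i' \<le> i \<and> i \<le> s \<and> 1 \<le> j \<and> j \<le> j' \<and> j' \<le> t \<and> A i j \<longrightarrow> A i' j'"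
    and Bmono: "\<forall>i i' j j'. 1 \<le> i \<and> i \<le> i' \<and> i' \<le> s \<and> 1 \<le> j' \<and> j' \<le> j \<and> j \<le> t \<and> B i j \<longrightarrow> B i' j'"
    and degX: "\<forall>i\<in>{1..s}. card {j\<in>{1..t}. A i j \<and> B i j} = d"
    and degY: "\<forall>j\<in>{1..t}. card {i\<in>{1..s}. A i j \<and> B i j} = e"
  shows "\<forall>i\<in>{1..s}. \<forall>j\<in>{1..t}. (A i j \<and> B i j) \<longleftrightarrow> (i-1) div e = (j-1) div d"
  using Amono Bmono degX degY
proof (induction s arbitrary: A B t rule: less_induct)
  case (less s)
  show ?case
  proof (cases "s = 0")
    case True then show ?thesis by simp
  next
    case False
    hence s1: "1 \<le> s" by simp
    have cX1: "card {j\<in>{1..t}. A 1 j \<and> B 1 j} = d" using less.prems(3) s1 by simp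
    then obtain j0 where j0: "j0 \<in> {1..t}" "A 1 j0" "B 1 j0" using d1
      by (metis (mono_tags, lifting) One_nat_def card.empty empty_Collect_eq le_zero_eq not_one_le_zero)
    hence t1: "1 \<le> t" by simp
    have cY1: "card {i\<in>{1..s}. A i 1 \<and> B i 1} = e" using less.prems(4) t1 by simp
    then obtain i0 where i0: "i0 \<in> {1..s}" "A i0 1" "B i0 1" using e1
      by (metis (mono_tags, lifting) One_nat_def card.empty empty_Collect_eq le_zero_eq not_one_le_zero)
    have B11: "B 1 1" using less.prems(2) j0 s1 by auto
    have A11: "A 1 1" using less.prems(1) i0 t1 by auto
    have NY1: "{i\<in>{1..s}. A i 1 \<and> B i 1} = {i\<in>{1..s}. A i 1}"
      using less.prems(2) B11 s1 t1 by auto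
    have dcY: "\<forall>i i'. i \<in> {i\<in>{1..s}. A i 1} \<and> 1 \<le> i' \<and> i' \<le> i \<longrightarrow> i' \<in> {i\<in>{1..s}. A i 1}"
      using less.prems(1) t1 by auto
    have memY: "i \<in> {i\<in>{1..s}. A i 1} \<longleftrightarrow> 1 \<le> i \<and> i \<le> e" for i
    proof -
      have sub: "{i\<in>{1..s}. A i 1} \<subseteq> {1..s}" by auto
      have "card {i\<in>{1..s}. A i 1} = e" using cY1 NY1 by simp
      thus ?thesis using downclosed_card[OF sub dcY, of i] by simp
    qed
    have es: "e \<le> s" using memY[of e] e1 by auto
    have NX1: "{j\<in>{1..t}. A 1 j \<and> B 1 j} = {j\<in>{1..t}. B 1 j}"
      using less.prems(1) A11 s1 t1 by auto
    have dcX: "\<forall>j j'. j \<in> {j\<in>{1..t}. B 1 j} \<and> 1 \<le> j' \<and> j' \<le> j \<longrightarrow> j' \<in> {j\<in>{1..t}. B 1 j}"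
      using less.prems(2) s1 by auto
    have memX: "j \<in> {j\<in>{1..t}. B 1 j} \<longleftrightarrow> 1 \<le> j \<and> j \<le> d" for j
    proof -
      have sub: "{j\<in>{1..t}. B 1 j} \<subseteq> {1..t}" by auto
      have "card {j\<in>{1..t}. B 1 j} = d" using cX1 NX1 by simp
      thus ?thesis using downclosed_card[OF sub dcX, of j] by simp
    qed
    have dt: "d \<le> t" using memX[of d] d1 by auto
    have blockR: "A i j \<and> B i j" if "1 \<le> i" "i \<le> e" "1 \<le> j" "j \<le> d" for i j
    proof -
      have iS: "i \<le> s" using that es by linarith
      have jt: "j \<le> t" using that dt by linarith
      have "A i 1" using memY[of i] that by blast
      hence "A i j" using less.prems(1)[rule_format, of i i 1 j] that iS jt by simp
      moreover have "B 1 j" using memX[of j] that by blast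
      hence "B i j" using less.prems(2)[rule_format, of 1 i j j] that iS jt by simp
      ultimately show ?thesis by blast
    qed
    have off1: "\<not> (A i j \<and> B i j)" if "1 \<le> i" "i \<le> e" "d < j" "j \<le> t" for i j
    proof
      assume R: "A i j \<and> B i j"
      have "insert j {1..d} \<subseteq> {j\<in>{1..t}. A i j \<and> B i j}" using R blockR that dt by auto
      hence "card (insert j {1..d}) \<le> card {j\<in>{1..t}. A i j \<and> B i j}" by (rule card_mono[rotated]) simp
      moreover have "card {j\<in>{1..t}. A i j \<and> B i j} = d" using less.prems(3) that es by simp
      moreover have "card (insert j {1..d}) = d + 1" using that by simp
      ultimately show False by simp
    qed
    have off2: "\<not> (A i j \<and> B i j)" if "e < i" "i \<le> s" "1 \<le> j" "j \<le> d" for i j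
    proof
      assume R: "A i j \<and> B i j"
      have "insert i {1..e} \<subseteq> {i\<in>{1..s}. A i j \<and> B i j}" using R blockR that es by auto
      hence "card (insert i {1..e}) \<le> card {i\<in>{1..s}. A i j \<and> B i j}" by (rule card_mono[rotated]) simp
      moreover have "card {i\<in>{1..s}. A i j \<and> B i j} = e" using less.prems(4) that dt by simp
      moreover have "card (insert i {1..e}) = e + 1" using that by simp
      ultimately show False by simp
    qed
    define A' where "A' i j = A (i+e) (j+d)" for i j
    define B' where "B' i j = B (i+e) (j+d)" for i j
    have lt: "s - e < s" using e1 s1 by simp
    have A'm: "\<forall>i i' j j'. 1 \<le> i' \<and> i' \<le> i \<and> i \<le> s - e \<and> 1 \<le> j \<and> j \<le> j' \<and> j' \<le> t - d \<and> A' i j \<longrightarrow> A' i' j'"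
    proof (intro allI impI)
      fix i i' j j' assume h: "1 \<le> i' \<and> i' \<le> i \<and> i \<le> s - e \<and> 1 \<le> j \<and> j \<le> j' \<and> j' \<le> t - d \<and> A' i j"
      have "i + e \<le> s" "j' + d \<le> t" using h by arith+
      then show "A' i' j'" using less.prems(1)[rule_format, of "i'+e" "i+e" "j+d" "j'+d"] h unfolding A'_def by auto
    qed
    have B'm: "\<forall>i i' j j'. 1 \<le> i \<and> i \<le> i' \<and> i' \<le> s - e \<and> 1 \<le> j' \<and> j' \<le> j \<and> j \<le> t - d \<and> B' i j \<longrightarrow> B' i' j'"
    proof (intro allI impI)
      fix i i' j j' assume h: "1 \<le> i \<and> i \<le> i' \<and> i' \<le> s - e \<and> 1 \<le> j' \<and> j' \<le> j \<and> j \<le> t - d \<and> B' i j"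
      have "i' + e \<le> s" "j + d \<le> t" using h by arith+
      then show "B' i' j'" using less.prems(2)[rule_format, of "i+e" "i'+e" "j'+d" "j+d"] h unfolding B'_def by auto
    qed
    have dX': "\<forall>i\<in>{1..s-e}. card {j\<in>{1..t-d}. A' i j \<and> B' i j} = d"
    proof
      fix i assume i: "i \<in> {1..s-e}"
      have "{j\<in>{1..t}. A (i+e) j \<and> B (i+e) j} = (\<lambda>j. j + d) ` {j\<in>{1..t-d}. A' i j \<and> B' i j}"
      proof (rule set_eqI, rule iffI)
        fix j assume j: "j \<in> {j\<in>{1..t}. A (i+e) j \<and> B (i+e) j}"
        have "d < j" using off2[of "i+e" j] i j by force
        then show "j \<in> (\<lambda>j. j + d) ` {j\<in>{1..t-d}. A' i j \<and> B' i j}"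
          using j unfolding A'_def B'_def by (auto intro!: image_eqI[of j _ "j - d"])
      next
        fix j assume "j \<in> (\<lambda>j. j + d) ` {j\<in>{1..t-d}. A' i j \<and> B' i j}"
        then show "j \<in> {j\<in>{1..t}. A (i+e) j \<and> B (i+e) j}" unfolding A'_def B'_def by auto
      qed
      moreover have "card {j\<in>{1..t}. A (i+e) j \<and> B (i+e) j} = d" using less.prems(3) i by auto
      ultimately show "card {j\<in>{1..t-d}. A' i j \<and> B' i j} = d" by (simp add: card_image)
    qed
    have dY': "\<forall>j\<in>{1..t-d}. card {i\<in>{1..s-e}. A' i j \<and> B' i j} = e"
    proof
      fix j assume j: "j \<in> {1..t-d}"
      have "{i\<in>{1..s}. A i (j+d) \<and> B i (j+d)} = (\<lambda>i. i + e) ` {i\<in>{1..s-e}. A' i j \<and> B' i j}"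
      proof (rule set_eqI, rule iffI)
        fix i assume i: "i \<in> {i\<in>{1..s}. A i (j+d) \<and> B i (j+d)}"
        have "e < i" using off1[of i "j+d"] i j by force
        then show "i \<in> (\<lambda>i. i + e) ` {i\<in>{1..s-e}. A' i j \<and> B' i j}"
          using i unfolding A'_def B'_def by (auto intro!: image_eqI[of i _ "i - e"])
      next
        fix i assume "i \<in> (\<lambda>i. i + e) ` {i\<in>{1..s-e}. A' i j \<and> B' i j}"
        then show "i \<in> {i\<in>{1..s}. A i (j+d) \<and> B i (j+d)}" unfolding A'_def B'_def by auto
      qed
      moreover have "card {i\<in>{1..s}. A i (j+d) \<and> B i (j+d)} = e" using less.prems(4) j by auto
      ultimately show "card {i\<in>{1..s-e}. A' i j \<and> B' i j} = e" by (simp add: card_image)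
    qed
    have IH: "\<forall>i\<in>{1..s-e}. \<forall>j\<in>{1..t-d}. (A' i j \<and> B' i j) \<longleftrightarrow> (i-1) div e = (j-1) div d"
      using less.IH[OF lt A'm B'm dX' dY'] .
    show ?thesis
    proof (intro ballI)
      fix i j assume i: "i \<in> {1..s}" and j: "j \<in> {1..t}"
      show "(A i j \<and> B i j) \<longleftrightarrow> (i-1) div e = (j-1) div d"
      proof (cases "i \<le> e")
        case ie: True
        have q1: "(i-1) div e = 0" using ie i by (auto simp: div_eq_0_iff)
        show ?thesis
        proof (cases "j \<le> d")
          case True
          have "(j-1) div d = 0" using True j by (auto simp: div_eq_0_iff)
          then show ?thesis using blockR[of i j] True ie i j q1 by simp
        next
          case False
          have "(j-1) div d \<noteq> 0" using False d1 by (simp add: div_eq_0_iff)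
          then show ?thesis using off1[of i j] False ie i j q1 by simp
        qed
      next
        case ie: False
        have q1: "(i-1) div e \<noteq> 0" using ie e1 by (simp add: div_eq_0_iff)
        show ?thesis
        proof (cases "j \<le> d")
          case True
          have "(j-1) div d = 0" using True j by (auto simp: div_eq_0_iff)
          then show ?thesis using off2[of i j] True ie i j q1 by simp
        next
          case False
          have i': "i - e \<in> {1..s-e}" using ie i by auto
          have j': "j - d \<in> {1..t-d}" using False j by auto
          have eqA: "(A i j \<and> B i j) = (A' (i-e) (j-d) \<and> B' (i-e) (j-d))"
            unfolding A'_def B'_def using ie False by simp
          have di: "(i-1) div e = (i-e-1) div e + 1"
          proof -
            have "i - 1 = (i-e-1) + e" using ie by arith
            hence "(i-1) div e = ((i-e-1) + e) div e" by (rule arg_cong)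
            also have "\<dots> = (i-e-1) div e + 1" by (rule div_add_self2) (use e1 in simp)
            finally show ?thesis .
          qed
          have dj: "(j-1) div d = (j-d-1) div d + 1"
          proof -
            have "j - 1 = (j-d-1) + d" using False by arith
            hence "(j-1) div d = ((j-d-1) + d) div d" by (rule arg_cong)
            also have "\<dots> = (j-d-1) div d + 1" by (rule div_add_self2) (use d1 in simp)
            finally show ?thesis .
          qed
          show ?thesis using IH i' j' eqA di dj by simp
        qed
      qed
    qed
  qed
qed

lemma ceil_div_nat:
  assumes "1 \<le> (i::nat)" "1 \<le> (e::nat)"
  shows "\<lceil>real i / real e\<rceil> = int ((i-1) div e) + 1"
proof -
  define q where "q = (i-1) div e"
  define r where "r = (i-1) mod e"
  have ie: "i = q * e + r + 1" using assms unfolding q_def r_def by simp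
  have r: "r < e" unfolding r_def using assms by simp
  have "real i / real e = real q + (real r + 1) / real e"
    using assms ie by (simp add: field_simps)
  moreover have "0 < (real r + 1) / real e" "(real r + 1) / real e \<le> 1" using r assms by auto
  ultimately show ?thesis unfolding q_def[symmetric]
    by (intro ceiling_unique) auto
qed


locale setting =
  fixes V :: "'v set" and E :: "('v \<times> 'v) set" and P :: "'v set set" and f :: "'v \<Rightarrow> real \<times> real"
  assumes graph: "fin_graph V E" and tf: "twin_free V E" and cs: "clique_stable V E P"
    and rf: "realization V E f"
begin

definition Nb :: "'v set \<Rightarrow> 'v \<Rightarrow> 'v set" where
  "Nb Z x = {u \<in> Z. (x, u) \<in> E}"

lemma finV: "finite V" using graph unfolding fin_graph_def by blast
lemma Esub: "E \<subseteq> V \<times> V" using graph unfolding fin_graph_def by blast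
lemma symE: "(a,b) \<in> E \<Longrightarrow> (b,a) \<in> E" using graph unfolding fin_graph_def sym_def by blast
lemma irrE: "(a,a) \<notin> E" using graph unfolding fin_graph_def irrefl_def by blast
lemma partP: "is_partition P V" using cs unfolding clique_stable_def by blast
lemma cliqueP: "X \<in> P \<Longrightarrow> is_clique V E X" using cs unfolding clique_stable_def by blast
lemma subV: "X \<in> P \<Longrightarrow> X \<subseteq> V" using partP unfolding is_partition_def by blast
lemma nonempty: "X \<in> P \<Longrightarrow> X \<noteq> {}" using partP unfolding is_partition_def by blast
lemma finX: "X \<in> P \<Longrightarrow> finite X" using subV finV finite_subset by blast
lemma disjXY: "X \<in> P \<Longrightarrow> Y \<in> P \<Longrightarrow> X \<noteq> Y \<Longrightarrow> x \<in> X \<Longrightarrow> y \<in> Y \<Longrightarrow> x \<noteq> y"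
  using partP unfolding is_partition_def disjoint_def pairwise_def disjnt_def by blast
lemma coverP: "v \<in> V \<Longrightarrow> \<exists>Z\<in>P. v \<in> Z" using partP unfolding is_partition_def by blast
lemma inclique: "X \<in> P \<Longrightarrow> x \<in> X \<Longrightarrow> y \<in> X \<Longrightarrow> x \<noteq> y \<Longrightarrow> (x,y) \<in> E"
  using cliqueP unfolding is_clique_def by blast
lemma adj: "u \<in> V \<Longrightarrow> x \<in> V \<Longrightarrow> u \<noteq> x \<Longrightarrow> (u,x) \<in> E \<longleftrightarrow> dist_inf (f u) (f x) \<le> 1"
  using rf unfolding realization_def by blast
lemma dist_self: "dist_inf p p \<le> 1" unfolding dist_inf_def by simp
lemma cdist: "X \<in> P \<Longrightarrow> x \<in> X \<Longrightarrow> y \<in> X \<Longrightarrow> dist_inf (f x) (f y) \<le> 1"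
proof -
  assume h: "X \<in> P" "x \<in> X" "y \<in> X"
  show ?thesis
  proof (cases "x = y")
    case True then show ?thesis using dist_self by simp
  next
    case False
    then show ?thesis using adj[of x y] inclique[OF h False] subV[OF h(1)] h by blast
  qed
qed
lemma stabP: "X \<in> P \<Longrightarrow> Y \<in> P \<Longrightarrow> v \<in> X \<Longrightarrow> w \<in> X \<Longrightarrow> card (Nb Y v) = card (Nb Y w)"
  unfolding Nb_def using stab[OF graph cs] by blast

lemma nb_eq:
  assumes "X \<in> P" "Z \<in> P" "x \<in> X" "x' \<in> X" "Nb Z x \<subseteq> Nb Z x'"
  shows "Nb Z x = Nb Z x'"
proof -
  have "finite (Nb Z x')" unfolding Nb_def using finX[OF assms(2)] by simp
  moreover have "card (Nb Z x) = card (Nb Z x')" using stabP assms by blast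
  ultimately show ?thesis using assms(5) card_subset_eq by blast
qed

lemma wit1:
  assumes X: "X \<in> P" and v: "v \<in> X" and w: "w \<in> X" and z: "z \<in> V" "z \<noteq> w"
    and vz: "(v,z) \<in> E" and wz: "(w,z) \<notin> E"
  shows "\<exists>Z\<in>P. \<exists>z\<in>Z. \<exists>z'\<in>Z. Z \<noteq> X \<and> (v,z) \<in> E \<and> (w,z) \<notin> E \<and> (w,z') \<in> E \<and> (v,z') \<notin> E"
proof -
  obtain Z where Z: "Z \<in> P" "z \<in> Z" using coverP[OF z(1)] by blast
  have ZX: "Z \<noteq> X"
  proof
    assume "Z = X"
    then have "(w,z) \<in> E" using inclique[OF X w] Z z by metis
    then show False using wz by blast
  qed
  have c: "card (Nb Z v) = card (Nb Z w)" using stabP[OF X Z(1) v w] .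
  have zin: "z \<in> Nb Z v" "z \<notin> Nb Z w" unfolding Nb_def using Z vz wz by auto
  have "\<exists>z'\<in>Z. (w,z') \<in> E \<and> (v,z') \<notin> E"
  proof (rule ccontr)
    assume "\<not> ?thesis"
    hence "Nb Z w \<subseteq> Nb Z v" unfolding Nb_def by blast
    hence "Nb Z w \<subset> Nb Z v" using zin by blast
    moreover have "finite (Nb Z v)" unfolding Nb_def using finX[OF Z(1)] by simp
    ultimately have "card (Nb Z w) < card (Nb Z v)" by (rule psubset_card_mono[rotated])
    then show False using c by simp
  qed
  then show ?thesis using Z ZX vz wz by blast
qed

lemma witness:
  assumes X: "X \<in> P" and v: "v \<in> X" and w: "w \<in> X" and vw: "v \<noteq> w"
  shows "\<exists>Z\<in>P. \<exists>z\<in>Z. \<exists>z'\<in>Z. Z \<noteq> X \<and> (v,z) \<in> E \<and> (w,z) \<notin> E \<and> (w,z') \<in> E \<and> (v,z') \<notin> E"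
proof -
  have vV: "v \<in> V" and wV: "w \<in> V" using subV[OF X] v w by auto
  have evw: "(v,w) \<in> E" "(w,v) \<in> E" using inclique[OF X v w vw] inclique[OF X w v] vw by auto
  have "closed_nbhd V E v \<noteq> closed_nbhd V E w" using tf vV wV vw unfolding twin_free_def by blast
  then obtain z where "(z \<in> closed_nbhd V E v \<and> z \<notin> closed_nbhd V E w) \<or>
                        (z \<in> closed_nbhd V E w \<and> z \<notin> closed_nbhd V E v)" by blast
  then show ?thesis
  proof
    assume h: "z \<in> closed_nbhd V E v \<and> z \<notin> closed_nbhd V E w"
    hence "z \<noteq> w" "z \<noteq> v" using evw vV unfolding closed_nbhd_def by auto
    hence "z \<in> V" "(v,z) \<in> E" "(w,z) \<notin> E" using h unfolding closed_nbhd_def by auto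
    then show ?thesis using wit1[OF X v w] \<open>z \<noteq> w\<close> by blast
  next
    assume h: "z \<in> closed_nbhd V E w \<and> z \<notin> closed_nbhd V E v"
    hence "z \<noteq> w" "z \<noteq> v" using evw wV unfolding closed_nbhd_def by auto
    hence "z \<in> V" "(w,z) \<in> E" "(v,z) \<notin> E" using h unfolding closed_nbhd_def by auto
    then obtain Z z1 z2 where "Z \<in> P" "z1 \<in> Z" "z2 \<in> Z" "Z \<noteq> X" "(w,z1) \<in> E" "(v,z1) \<notin> E"
        "(v,z2) \<in> E" "(w,z2) \<notin> E"
      using wit1[OF X w v] \<open>z \<noteq> v\<close> by blast
    then show ?thesis by blast
  qed
qed

lemma witness_geo:
  assumes X: "X \<in> P" and v: "v \<in> X" and w: "w \<in> X" and vw: "v \<noteq> w"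
  shows "\<exists>Z\<in>P. \<exists>z\<in>Z. \<exists>z'\<in>Z. Z \<noteq> X \<and> (v,z) \<in> E \<and> (w,z) \<notin> E \<and>
     dist_inf (f v) (f w) \<le> 1 \<and> dist_inf (f z) (f z') \<le> 1 \<and> dist_inf (f z) (f v) \<le> 1 \<and>
     \<not> dist_inf (f z) (f w) \<le> 1 \<and> dist_inf (f z') (f w) \<le> 1 \<and> \<not> dist_inf (f z') (f v) \<le> 1"
proof -
  obtain Z z z' where Z: "Z \<in> P" "z \<in> Z" "z' \<in> Z" "Z \<noteq> X" "(v,z) \<in> E" "(w,z) \<notin> E"
      "(w,z') \<in> E" "(v,z') \<notin> E"
    using witness[OF X v w vw] by blast
  have V: "v \<in> V" "w \<in> V" "z \<in> V" "z' \<in> V" using subV X Z v w by auto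
  have ne: "z \<noteq> v" "z \<noteq> w" "z' \<noteq> v" "z' \<noteq> w" using disjXY[OF Z(1) X Z(4)] Z v w by auto
  have d1: "dist_inf (f v) (f w) \<le> 1" using cdist[OF X v w] .
  have d2: "dist_inf (f z) (f z') \<le> 1" using cdist[OF Z(1) Z(2) Z(3)] .
  have d3: "dist_inf (f z) (f v) \<le> 1" using adj[of z v] V ne symE[OF Z(5)] by blast
  have d4: "\<not> dist_inf (f z) (f w) \<le> 1" using adj[of z w] V ne Z(6) symE by blast
  have d5: "dist_inf (f z') (f w) \<le> 1" using adj[of z' w] V ne symE[OF Z(7)] by blast
  have d6: "\<not> dist_inf (f z') (f v) \<le> 1" using adj[of z' v] V ne Z(8) symE by blast
  show ?thesis using Z d1 d2 d3 d4 d5 d6 by blast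
qed

lemma noTie:
  assumes X: "X \<in> P" and v: "v \<in> X" and w: "w \<in> X" and vw: "v \<noteq> w"
  shows "fst (f v) \<noteq> fst (f w) \<and> snd (f v) \<noteq> snd (f w)"
  using witness_geo[OF X v w vw] G_tie by blast

lemma adjZX:
  assumes "Z \<in> P" "X \<in> P" "Z \<noteq> X" "u \<in> Z" "x \<in> X"
  shows "(x,u) \<in> E \<longleftrightarrow> dist_inf (f u) (f x) \<le> 1"
proof -
  have "u \<noteq> x" using disjXY assms by blast
  moreover have "u \<in> V" "x \<in> V" using subV assms by auto
  ultimately show ?thesis using adj[of u x] symE by blast
qed

lemma rfl_simps [simp]: "fst (rfl b p) = fst p" "snd (rfl b p) = b * snd p"
  unfolding rfl_def by auto

lemma sep:
  assumes b: "b \<in> {-1,1}" and X: "X \<in> P" and v: "v \<in> X" and w: "w \<in> X"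
    and lt: "fst (f v) < fst (f w)" and lt2: "b * snd (f w) < b * snd (f v)"
  shows "\<exists>Z\<in>P. (\<forall>x\<in>X. \<forall>x'\<in>X. fst (f x) \<le> fst (f x') \<and> b * snd (f x) \<le> b * snd (f x') \<longrightarrow> Nb Z x = Nb Z x')
      \<and> Nb Z v \<noteq> Nb Z w"
proof -
  have vw: "v \<noteq> w" using lt by auto
  obtain Z z z' where Z: "Z \<in> P" "z \<in> Z" "z' \<in> Z" "Z \<noteq> X" "(v,z) \<in> E" "(w,z) \<notin> E"
    and D: "dist_inf (f v) (f w) \<le> 1" "dist_inf (f z) (f z') \<le> 1" "dist_inf (f z) (f v) \<le> 1"
     "\<not> dist_inf (f z) (f w) \<le> 1" "dist_inf (f z') (f w) \<le> 1" "\<not> dist_inf (f z') (f v) \<le> 1"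
    using witness_geo[OF X v w vw] by blast
  define g where "g u = rfl b (f u)" for u
  have dg: "dist_inf (g a) (g c) = dist_inf (f a) (f c)" for a c
    unfolding g_def using dist_rfl[OF b] by blast
  have gf: "fst (g u) = fst (f u)" "snd (g u) = b * snd (f u)" for u unfolding g_def by auto
  have cases: "(fst (g z') > fst (g v) + 1 \<and> snd (g z) > snd (g w) + 1) \<or>
               (fst (g z) < fst (g w) - 1 \<and> snd (g z') < snd (g v) - 1)"
    by (rule G_dec_cases) (use D lt lt2 in \<open>simp_all add: dg gf\<close>)
  have dZ: "dist_inf (g u) (g z) \<le> 1" "dist_inf (g u) (g z') \<le> 1" if "u \<in> Z" for u
    using cdist[OF Z(1) that Z(2)] cdist[OF Z(1) that Z(3)] by (simp_all add: dg)
  have dX: "dist_inf (g x) (g v) \<le> 1" "dist_inf (g x) (g w) \<le> 1" if "x \<in> X" for x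
    using cdist[OF X that v] cdist[OF X that w] by (simp_all add: dg)
  have eq: "Nb Z x = Nb Z x'"
    if x: "x \<in> X" and x': "x' \<in> X" and le: "fst (f x) \<le> fst (f x')" "b * snd (f x) \<le> b * snd (f x')" for x x'
  proof -
    have le': "fst (g x) \<le> fst (g x')" "snd (g x) \<le> snd (g x')" using le by (simp_all add: gf)
    have nbd: "u \<in> Nb Z y \<longleftrightarrow> u \<in> Z \<and> dist_inf (g u) (g y) \<le> 1" if "y \<in> X" for u y
      unfolding Nb_def using adjZX[OF Z(1) X Z(4) _ that] by (auto simp: dg)
    from cases show ?thesis
    proof
      assume c: "fst (g z') > fst (g v) + 1 \<and> snd (g z) > snd (g w) + 1"
      have "Nb Z x \<subseteq> Nb Z x'"
      proof
        fix u assume u: "u \<in> Nb Z x"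
        hence uZ: "u \<in> Z" and ux: "dist_inf (g u) (g x) \<le> 1" using nbd[OF x] by auto
        have "dist_inf (g u) (g x') \<le> 1"
          using G_UR[of "g v" "g z'" "g w" "g z" "g u" "g x" "g x'"] c dZ[OF uZ] dX[OF x] dX[OF x'] le' ux
          by blast
        thus "u \<in> Nb Z x'" using nbd[OF x'] uZ by auto
      qed
      thus ?thesis using nb_eq[OF X Z(1) x x'] by blast
    next
      assume c: "fst (g z) < fst (g w) - 1 \<and> snd (g z') < snd (g v) - 1"
      have "Nb Z x' \<subseteq> Nb Z x"
      proof
        fix u assume u: "u \<in> Nb Z x'"
        hence uZ: "u \<in> Z" and ux: "dist_inf (g u) (g x') \<le> 1" using nbd[OF x'] by auto
        have "dist_inf (g u) (g x) \<le> 1"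
          using G_LL[of "g z" "g w" "g z'" "g v" "g u" "g x" "g x'"] c dZ[OF uZ] dX[OF x] dX[OF x'] le' ux
          by blast
        thus "u \<in> Nb Z x" using nbd[OF x] uZ by auto
      qed
      thus ?thesis using nb_eq[OF X Z(1) x' x] by blast
    qed
  qed
  have "z \<in> Nb Z v" "z \<notin> Nb Z w" unfolding Nb_def using Z by auto
  hence "Nb Z v \<noteq> Nb Z w" by blast
  thus ?thesis using eq Z(1) by blast
qed

lemma comb:
  assumes tot: "\<forall>x\<in>X. \<forall>y\<in>X. C1 x y \<or> C2 x y"
    and e1: "\<forall>x\<in>X. \<forall>y\<in>X. C1 x y \<longrightarrow> g1 x = g1 y"
    and e2: "\<forall>x\<in>X. \<forall>y\<in>X. C2 x y \<longrightarrow> g2 x = g2 y"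
    and v: "v \<in> X" and w: "w \<in> X" and n1: "g1 v \<noteq> g1 w"
    and p: "p \<in> X" and q: "q \<in> X" and n2: "g2 p \<noteq> g2 q"
  shows False
proof -
  have key: "g2 x = g2 y" if "x \<in> X" "y \<in> X" "g1 x = g1 v" "g1 y \<noteq> g1 v" for x y
  proof -
    have "\<not> C1 x y" using e1 that by metis
    thus ?thesis using tot e2 that by blast
  qed
  show False
  proof (cases "g1 p = g1 v")
    case pT: True
    show False
    proof (cases "g1 q = g1 v")
      case True
      have "g2 p = g2 w" using key[OF p w pT] n1 by metis
      moreover have "g2 q = g2 w" using key[OF q w True] n1 by metis
      ultimately show False using n2 by simp
    next
      case False
      then show False using key[OF p q pT False] n2 by simp
    qed
  next
    case pF: False
    show False
    proof (cases "g1 q = g1 v")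
      case True
      then show False using key[OF q p True pF] n2 by simp
    next
      case False
      have "g2 v = g2 p" using key[OF v p refl pF] .
      moreover have "g2 v = g2 q" using key[OF v q refl False] .
      ultimately show False using n2 by simp
    qed
  qed
qed

lemma bad_pair:
  assumes b: "b \<in> {-1,1}" and X: "X \<in> P" and no: "\<not> oriented f X b"
  shows "\<exists>v\<in>X. \<exists>w\<in>X. fst (f v) < fst (f w) \<and> b * snd (f w) < b * snd (f v)"
proof -
  obtain v w where vw: "v \<in> X" "w \<in> X" "\<not> (fst (f v) \<le> fst (f w) \<longleftrightarrow> b * snd (f v) \<le> b * snd (f w))"
    using no b unfolding oriented_def by blast
  have ne: "v \<noteq> w" using vw by auto
  have nt: "fst (f v) \<noteq> fst (f w)" "snd (f v) \<noteq> snd (f w)" using noTie[OF X vw(1,2) ne] by auto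
  have nt2: "b * snd (f v) \<noteq> b * snd (f w)" using nt(2) b by auto
  show ?thesis
  proof (cases "fst (f v) \<le> fst (f w)")
    case True
    then show ?thesis using vw nt nt2 by (metis linorder_not_le order_le_less)
  next
    case False
    then show ?thesis using vw nt nt2 by (metis linorder_not_le order_le_less)
  qed
qed

lemma part1_ex:
  assumes X: "X \<in> P"
  shows "oriented f X 1 \<or> oriented f X (-1)"
proof (rule ccontr)
  assume "\<not> ?thesis"
  hence n1: "\<not> oriented f X 1" and n2: "\<not> oriented f X (-1)" by auto
  obtain v w where vw: "v \<in> X" "w \<in> X" "fst (f v) < fst (f w)" "1 * snd (f w) < 1 * snd (f v)"
    using bad_pair[OF _ X n1] by auto
  obtain p q where pq: "p \<in> X" "q \<in> X" "fst (f p) < fst (f q)" "-1 * snd (f q) < -1 * snd (f p)"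
    using bad_pair[OF _ X n2] by auto
  obtain Z1 where Z1: "\<forall>x\<in>X. \<forall>x'\<in>X. fst (f x) \<le> fst (f x') \<and> 1 * snd (f x) \<le> 1 * snd (f x') \<longrightarrow> Nb Z1 x = Nb Z1 x'"
    "Nb Z1 v \<noteq> Nb Z1 w"
    using sep[OF _ X vw] by auto
  obtain Z2 where Z2: "\<forall>x\<in>X. \<forall>x'\<in>X. fst (f x) \<le> fst (f x') \<and> -1 * snd (f x) \<le> -1 * snd (f x') \<longrightarrow> Nb Z2 x = Nb Z2 x'"
    "Nb Z2 p \<noteq> Nb Z2 q"
    using sep[OF _ X pq] by auto
  show False
  proof (rule comb[of X "\<lambda>x y. (fst (f x) \<le> fst (f y) \<and> snd (f x) \<le> snd (f y)) \<or> (fst (f y) \<le> fst (f x) \<and> snd (f y) \<le> snd (f x))"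
        "\<lambda>x y. (fst (f x) \<le> fst (f y) \<and> snd (f y) \<le> snd (f x)) \<or> (fst (f y) \<le> fst (f x) \<and> snd (f x) \<le> snd (f y))"
        "Nb Z1" "Nb Z2" v w p q])
    show "\<forall>x\<in>X. \<forall>y\<in>X. ((fst (f x) \<le> fst (f y) \<and> snd (f x) \<le> snd (f y)) \<or> (fst (f y) \<le> fst (f x) \<and> snd (f y) \<le> snd (f x))) \<or>
       ((fst (f x) \<le> fst (f y) \<and> snd (f y) \<le> snd (f x)) \<or> (fst (f y) \<le> fst (f x) \<and> snd (f x) \<le> snd (f y)))"
      by auto
    show "\<forall>x\<in>X. \<forall>y\<in>X. (fst (f x) \<le> fst (f y) \<and> snd (f x) \<le> snd (f y)) \<or> (fst (f y) \<le> fst (f x) \<and> snd (f y) \<le> snd (f x)) \<longrightarrow> Nb Z1 x = Nb Z1 y"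
    proof (intro ballI impI)
      fix x y assume xy: "x \<in> X" "y \<in> X"
        and h: "(fst (f x) \<le> fst (f y) \<and> snd (f x) \<le> snd (f y)) \<or> (fst (f y) \<le> fst (f x) \<and> snd (f y) \<le> snd (f x))"
      from h show "Nb Z1 x = Nb Z1 y"
      proof
        assume "fst (f x) \<le> fst (f y) \<and> snd (f x) \<le> snd (f y)"
        thus ?thesis using Z1(1)[rule_format, OF xy(1) xy(2)] by simp
      next
        assume "fst (f y) \<le> fst (f x) \<and> snd (f y) \<le> snd (f x)"
        hence "Nb Z1 y = Nb Z1 x" using Z1(1)[rule_format, OF xy(2) xy(1)] by simp
        thus ?thesis by simp
      qed
    qed
    show "\<forall>x\<in>X. \<forall>y\<in>X. (fst (f x) \<le> fst (f y) \<and> snd (f y) \<le> snd (f x)) \<or> (fst (f y) \<le> fst (f x) \<and> snd (f x) \<le> snd (f y)) \<longrightarrow> Nb Z2 x = Nb Z2 y"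
    proof (intro ballI impI)
      fix x y assume xy: "x \<in> X" "y \<in> X"
        and h: "(fst (f x) \<le> fst (f y) \<and> snd (f y) \<le> snd (f x)) \<or> (fst (f y) \<le> fst (f x) \<and> snd (f x) \<le> snd (f y))"
      from h show "Nb Z2 x = Nb Z2 y"
      proof
        assume "fst (f x) \<le> fst (f y) \<and> snd (f y) \<le> snd (f x)"
        thus ?thesis using Z2(1)[rule_format, OF xy(1) xy(2)] by simp
      next
        assume "fst (f y) \<le> fst (f x) \<and> snd (f x) \<le> snd (f y)"
        hence "Nb Z2 y = Nb Z2 x" using Z2(1)[rule_format, OF xy(2) xy(1)] by simp
        thus ?thesis by simp
      qed
    qed
  qed (use vw pq Z1(2) Z2(2) in auto)
qed


lemma two_elems:
  assumes "finite X" "2 \<le> card X"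
  obtains v w where "v \<in> X" "w \<in> X" "v \<noteq> w"
proof -
  have "\<not> card X \<le> Suc 0" using assms by simp
  hence "\<not> (\<forall>a\<in>X. \<forall>b\<in>X. a = b)" using card_le_Suc0_iff_eq[OF assms(1)] by blast
  thus ?thesis using that by blast
qed

lemma oriented_strict:
  assumes "oriented f X b" "v \<in> X" "w \<in> X" "fst (f v) < fst (f w)"
  shows "b * snd (f v) < b * snd (f w)"
  using assms unfolding oriented_def by (meson linorder_not_le order_less_imp_le)

lemma ori_unique:
  assumes X: "X \<in> P" and c: "2 \<le> card X" and o1: "oriented f X b1" and o2: "oriented f X b2"
  shows "b1 = b2"
proof -
  obtain v w where vw: "v \<in> X" "w \<in> X" "v \<noteq> w" using two_elems[OF finX[OF X] c] by blast
  have nt: "fst (f v) \<noteq> fst (f w)" using noTie[OF X vw] by blast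
  have b: "b1 \<in> {-1,1}" "b2 \<in> {-1,1}" using o1 o2 unfolding oriented_def by auto
  show ?thesis
  proof (cases "fst (f v) < fst (f w)")
    case True
    have "b1 * snd (f v) < b1 * snd (f w)" "b2 * snd (f v) < b2 * snd (f w)"
      using oriented_strict[OF o1 vw(1,2) True] oriented_strict[OF o2 vw(1,2) True] by auto
    then show ?thesis using b by auto
  next
    case False
    hence F: "fst (f w) < fst (f v)" using nt by auto
    have "b1 * snd (f w) < b1 * snd (f v)" "b2 * snd (f w) < b2 * snd (f v)"
      using oriented_strict[OF o1 vw(2,1) F] oriented_strict[OF o2 vw(2,1) F] by auto
    then show ?thesis using b by auto
  qed
qed

lemma part1:
  assumes X: "X \<in> P"
  shows "(\<exists>b. oriented f X b) \<and> (card X \<ge> 2 \<longrightarrow> (\<exists>!b. oriented f X b))"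
  using part1_ex[OF X] ori_unique[OF X] by blast

lemma single_oriented:
  assumes "card X = 1" "b \<in> {-1,1}" shows "oriented f X b"
proof -
  have fin: "finite X" using assms(1) card.infinite by fastforce
  have "\<forall>v\<in>X. \<forall>w\<in>X. v = w" using card_le_Suc0_iff_eq[OF fin] assms(1) by simp
  thus ?thesis unfolding oriented_def using assms(2) by auto
qed

lemma ori_props:
  assumes X: "X \<in> P"
  shows "ori f X \<in> {-1,1} \<and> oriented f X (ori f X)"
proof (cases "card X = 1")
  case True
  then show ?thesis unfolding ori_def using single_oriented by auto
next
  case False
  have "card X \<noteq> 0" using finX[OF X] nonempty[OF X] by simp
  hence c: "2 \<le> card X" using False by linarith
  have ex1: "\<exists>!b. oriented f X b" using part1[OF X] c by blast
  have "ori f X = (THE b. oriented f X b)" unfolding ori_def using False by simp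
  hence "oriented f X (ori f X)" using theI'[OF ex1] by simp
  moreover hence "ori f X \<in> {-1,1}" unfolding oriented_def by blast
  ultimately show ?thesis by blast
qed

lemma dist_comm: "dist_inf p q = dist_inf q p"
  unfolding dist_inf_def by (simp add: abs_minus_commute)

lemma single_allnone:
  assumes X: "X \<in> P" and Y: "Y \<in> P" and c: "card X = 1"
  shows "(\<forall>x\<in>X. \<forall>y\<in>Y. (x,y) \<in> E) \<or> (\<forall>x\<in>X. \<forall>y\<in>Y. (x,y) \<notin> E)"
proof -
  obtain x where x: "X = {x}" using card_1_singletonE[OF c] by metis
  have cy0: "Nb X y = (if (y,x) \<in> E then {x} else {})" for y
    unfolding Nb_def x by auto
  have cy: "card (Nb X y) = (if (y,x) \<in> E then 1 else 0)" for y
    using cy0[of y] by simp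
  have eqv: "(y,x) \<in> E \<longleftrightarrow> (y',x) \<in> E" if "y \<in> Y" "y' \<in> Y" for y y'
  proof -
    have c: "card (Nb X y) = card (Nb X y')" using stabP[OF Y X that] .
    show ?thesis
    proof (cases "(y,x) \<in> E"; cases "(y',x) \<in> E")
    qed (use c cy[of y] cy[of y'] in simp_all)
  qed
  show ?thesis
  proof (cases "\<exists>y0\<in>Y. (x,y0) \<in> E")
    case True
    then obtain y0 where "y0 \<in> Y" "(x,y0) \<in> E" by blast
    then show ?thesis using eqv symE x by blast
  next
    case False
    then show ?thesis using x by blast
  qed
qed

lemma single_allnone2:
  assumes X: "X \<in> P" and Y: "Y \<in> P" and c: "card Y = 1"
  shows "(\<forall>x\<in>X. \<forall>y\<in>Y. (x,y) \<in> E) \<or> (\<forall>x\<in>X. \<forall>y\<in>Y. (x,y) \<notin> E)"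
  using single_allnone[OF Y X c] symE by blast

lemma part2:
  assumes X: "X \<in> P" and Y: "Y \<in> P" and o: "ori f X \<noteq> ori f Y"
  shows "(\<forall>x\<in>X. \<forall>y\<in>Y. (x,y) \<in> E) \<or> (\<forall>x\<in>X. \<forall>y\<in>Y. (x,y) \<notin> E)"
proof -
  consider "card X = 1" | "card Y = 1" | "card X \<ge> 2 \<and> card Y \<ge> 2"
  proof -
    have "card X \<noteq> 0" "card Y \<noteq> 0" using finX nonempty X Y by auto
    thus ?thesis using that by linarith
  qed
  then show ?thesis
  proof cases
    case 1 then show ?thesis using single_allnone[OF X Y] by blast
  next
    case 2 then show ?thesis using single_allnone2[OF X Y] by blast
  next
    case 3
    have XY: "X \<noteq> Y" using o by blast
    define b where "b = ori f X"
    have b: "b \<in> {-1,1}" and oX: "oriented f X b" using ori_props[OF X] unfolding b_def by auto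
    have oY: "oriented f Y (- b)"
    proof -
      have "ori f Y \<in> {-1,1}" "oriented f Y (ori f Y)" using ori_props[OF Y] by auto
      moreover have "ori f Y = - b" using b o calculation(1) unfolding b_def by auto
      ultimately show ?thesis by simp
    qed
    have dxy: "(x,y) \<in> E \<longleftrightarrow> dist_inf (f x) (f y) \<le> 1" if "x \<in> X" "y \<in> Y" for x y
      using adjZX[OF Y X XY[symmetric] that(2) that(1)] dist_comm by metis
    have no2K2: False if x: "x \<in> X" "x' \<in> X" and y: "y \<in> Y" "y' \<in> Y"
      and e: "(x,y) \<in> E" "(x',y') \<in> E" "(x,y') \<notin> E" "(x',y) \<notin> E" for x x' y y'
    proof (rule G_2K2[OF b])
      show "dist_inf (f x) (f x') \<le> 1" using cdist[OF X x] .
      show "dist_inf (f y) (f y') \<le> 1" using cdist[OF Y y] .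
      show "fst (f x) \<le> fst (f x') \<longleftrightarrow> b * snd (f x) \<le> b * snd (f x')" using oX x unfolding oriented_def by blast
      show "fst (f x') \<le> fst (f x) \<longleftrightarrow> b * snd (f x') \<le> b * snd (f x)" using oX x unfolding oriented_def by blast
      show "fst (f y) \<le> fst (f y') \<longleftrightarrow> - b * snd (f y) \<le> - b * snd (f y')" using oY y unfolding oriented_def by blast
      show "fst (f y') \<le> fst (f y) \<longleftrightarrow> - b * snd (f y') \<le> - b * snd (f y)" using oY y unfolding oriented_def by blast
      show "dist_inf (f x) (f y) \<le> 1" using dxy x y e by blast
      show "dist_inf (f x') (f y') \<le> 1" using dxy x y e by blast
      show "\<not> dist_inf (f x) (f y') \<le> 1" using dxy x y e by blast
      show "\<not> dist_inf (f x') (f y) \<le> 1" using dxy x y e by blast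
    qed
    have nbeq: "Nb Y x = Nb Y x'" if x: "x \<in> X" "x' \<in> X" for x x'
    proof (cases "Nb Y x \<subseteq> Nb Y x'")
      case True then show ?thesis using nb_eq[OF X Y x] by blast
    next
      case False
      then obtain y where y: "y \<in> Y" "(x,y) \<in> E" "(x',y) \<notin> E" unfolding Nb_def by blast
      have "Nb Y x' \<subseteq> Nb Y x"
      proof
        fix y' assume "y' \<in> Nb Y x'"
        hence y': "y' \<in> Y" "(x',y') \<in> E" unfolding Nb_def by auto
        have "(x,y') \<in> E" using no2K2[OF x y(1) y'(1) y(2) y'(2) _ y(3)] by blast
        thus "y' \<in> Nb Y x" using y' unfolding Nb_def by blast
      qed
      then show ?thesis using nb_eq[OF X Y x(2) x(1)] by blast
    qed
    show ?thesis
    proof (rule ccontr)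
      assume "\<not> ?thesis"
      then obtain x1 y1 x2 y2 where h: "x1 \<in> X" "y1 \<in> Y" "(x1,y1) \<in> E" "x2 \<in> X" "y2 \<in> Y" "(x2,y2) \<notin> E"
        by blast
      have "Nb X y1 = X"
      proof
        show "Nb X y1 \<subseteq> X" unfolding Nb_def by blast
        show "X \<subseteq> Nb X y1"
        proof
          fix x assume x: "x \<in> X"
          have n1: "y1 \<in> Nb Y x1" using h(2,3) unfolding Nb_def by blast
          have "y1 \<in> Nb Y x" using nbeq[OF h(1) x] n1 by simp
          thus "x \<in> Nb X y1" using x symE unfolding Nb_def by blast
        qed
      qed
      moreover have "Nb X y2 = {}"
      proof -
        have n2: "y2 \<notin> Nb Y x2" using h(6) unfolding Nb_def by blast
        have nn: "y2 \<notin> Nb Y x" if x: "x \<in> X" for x using nbeq[OF h(4) x] n2 by simp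
        show ?thesis
        proof (rule equals0I)
          fix x assume "x \<in> Nb X y2"
          hence x: "x \<in> X" "(y2,x) \<in> E" unfolding Nb_def by auto
          hence "y2 \<in> Nb Y x" using symE[OF x(2)] h(5) unfolding Nb_def by blast
          thus False using nn[OF x(1)] by blast
        qed
      qed
      moreover have "card (Nb X y1) = card (Nb X y2)" using stabP[OF Y X h(2) h(5)] .
      ultimately have "card X = 0" by simp
      thus False using finX[OF X] nonempty[OF X] by simp
    qed
  qed
qed


lemma bij_card_filter:
  assumes "bij_betw h I Z"
  shows "card {j\<in>I. Q (h j)} = card {z\<in>Z. Q z}"
proof -
  have "{z\<in>Z. Q z} = h ` {j\<in>I. Q (h j)}" using assms unfolding bij_betw_def by auto
  moreover have "inj_on h {j\<in>I. Q (h j)}" using assms unfolding bij_betw_def by (auto intro: inj_on_subset)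
  ultimately show ?thesis by (simp add: card_image)
qed

lemma sorted_mono:
  fixes g :: "nat \<Rightarrow> real" and n i i' :: nat
  assumes st: "\<forall>i. 1 \<le> i \<and> i < n \<longrightarrow> (g i :: real) \<le> g (i + 1)"
  shows "1 \<le> i \<Longrightarrow> i \<le> i' \<Longrightarrow> i' \<le> n \<Longrightarrow> g i \<le> g i'"
proof -
  assume h: "1 \<le> i" "i \<le> i'" "i' \<le> n"
  have "\<forall>m. i + m \<le> n \<longrightarrow> g i \<le> g (i + m)"
  proof
    fix m show "i + m \<le> n \<longrightarrow> g i \<le> g (i + m)"
    proof (induction m)
      case 0 then show ?case by simp
    next
      case (Suc m)
      show ?case
      proof
        assume "i + Suc m \<le> n"
        hence "g i \<le> g (i + m)" "g (i + m) \<le> g (i + m + 1)" using Suc st h by auto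
        thus "g i \<le> g (i + Suc m)" by simp
      qed
    qed
  qed
  thus ?thesis using h by (metis le_add_diff_inverse)
qed

lemma part3:
  assumes X: "X \<in> P" and Y: "Y \<in> P" and XY: "X \<noteq> Y" and o: "ori f X = ori f Y"
    and k1: "card {(x, y). x \<in> X \<and> y \<in> Y \<and> (x, y) \<in> E} \<ge> 1"
    and bx: "bij_betw xs {1..card X} X"
    and sx: "\<forall>i. 1 \<le> i \<and> i < card X \<longrightarrow> fst (f (xs i)) \<le> fst (f (xs (i + 1)))"
    and byy: "bij_betw ys {1..card Y} Y"
    and sy: "\<forall>j. 1 \<le> j \<and> j < card Y \<longrightarrow> fst (f (ys j)) \<le> fst (f (ys (j + 1)))"
    and i: "i \<in> {1..card X}" and j: "j \<in> {1..card Y}"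
  shows "(xs i, ys j) \<in> E \<longleftrightarrow>
     \<lceil>real i * real (card Y) / real (card {(x, y). x \<in> X \<and> y \<in> Y \<and> (x, y) \<in> E})\<rceil>
     = \<lceil>real j * real (card X) / real (card {(x, y). x \<in> X \<and> y \<in> Y \<and> (x, y) \<in> E})\<rceil>"
proof -
  define s where "s = card X"
  define t where "t = card Y"
  define K where "K = card {(x, y). x \<in> X \<and> y \<in> Y \<and> (x, y) \<in> E}"
  define b where "b = ori f X"
  have b: "b \<in> {-1,1}" and oX: "oriented f X b" using ori_props[OF X] unfolding b_def by auto
  have oY: "oriented f Y b" using ori_props[OF Y] o unfolding b_def by auto
  have xsX: "xs i \<in> X" if "i \<in> {1..s}" for i using bx that unfolding s_def by (rule bij_betw_apply)
  have ysY: "ys j \<in> Y" if "j \<in> {1..t}" for j using byy that unfolding t_def by (rule bij_betw_apply)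
  have mX1: "fst (f (xs i)) \<le> fst (f (xs i'))" if "1 \<le> i" "i \<le> i'" "i' \<le> s" for i i'
    using sorted_mono[of "card X" "\<lambda>i. fst (f (xs i))", OF sx] that unfolding s_def by blast
  have mY1: "fst (f (ys j)) \<le> fst (f (ys j'))" if "1 \<le> j" "j \<le> j'" "j' \<le> t" for j j'
    using sorted_mono[of "card Y" "\<lambda>j. fst (f (ys j))", OF sy] that unfolding t_def by blast
  have mX2: "b * snd (f (xs i)) \<le> b * snd (f (xs i'))" if "1 \<le> i" "i \<le> i'" "i' \<le> s" for i i'
  proof -
    have "xs i \<in> X" "xs i' \<in> X" using xsX that by auto
    thus ?thesis using oX mX1[OF that] unfolding oriented_def by blast
  qed
  have mY2: "b * snd (f (ys j)) \<le> b * snd (f (ys j'))" if "1 \<le> j" "j \<le> j'" "j' \<le> t" for j j'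
  proof -
    have "ys j \<in> Y" "ys j' \<in> Y" using ysY that by auto
    thus ?thesis using oY mY1[OF that] unfolding oriented_def by blast
  qed
  define A where "A i j = (fst (f (xs i)) - fst (f (ys j)) \<le> 1 \<and> b * snd (f (xs i)) - b * snd (f (ys j)) \<le> 1)" for i j
  define B where "B i j = (fst (f (ys j)) - fst (f (xs i)) \<le> 1 \<and> b * snd (f (ys j)) - b * snd (f (xs i)) \<le> 1)" for i j
  have babs: "\<bar>b * u - b * w\<bar> = \<bar>u - w\<bar>" for u w using b by (auto simp: abs_minus_commute)
  have adjAB: "(xs i, ys j) \<in> E \<longleftrightarrow> A i j \<and> B i j" if "i \<in> {1..s}" "j \<in> {1..t}" for i j
  proof -
    have "(xs i, ys j) \<in> E \<longleftrightarrow> dist_inf (f (ys j)) (f (xs i)) \<le> 1"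
      using adjZX[OF Y X XY[symmetric] ysY[OF that(2)] xsX[OF that(1)]] .
    also have "\<dots> \<longleftrightarrow> \<bar>fst (f (xs i)) - fst (f (ys j))\<bar> \<le> 1 \<and> \<bar>b * snd (f (xs i)) - b * snd (f (ys j))\<bar> \<le> 1"
      unfolding dist_le1 babs by (simp add: abs_minus_commute)
    also have "\<dots> \<longleftrightarrow> A i j \<and> B i j" unfolding A_def B_def by (auto simp: abs_le_iff)
    finally show ?thesis .
  qed
  define d where "d = card (Nb Y (xs 1))"
  define e where "e = card (Nb X (ys 1))"
  have s1: "1 \<le> s" using finX[OF X] nonempty[OF X] unfolding s_def by (simp add: Suc_le_eq card_gt_0_iff)
  have t1: "1 \<le> t" using finX[OF Y] nonempty[OF Y] unfolding t_def by (simp add: Suc_le_eq card_gt_0_iff)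
  have degx: "card (Nb Y x) = d" if "x \<in> X" for x
    unfolding d_def using stabP[OF X Y that xsX] s1 by simp
  have degy: "card (Nb X y) = e" if "y \<in> Y" for y
    unfolding e_def using stabP[OF Y X that ysY] t1 by simp
  have finNb: "finite (Nb Z x)" if "Z \<in> P" for Z x unfolding Nb_def using finX[OF that] by simp
  have K1: "K = s * d"
  proof -
    have "{(x, y). x \<in> X \<and> y \<in> Y \<and> (x, y) \<in> E} = Sigma X (Nb Y)" unfolding Nb_def by auto
    hence "K = (\<Sum>x\<in>X. card (Nb Y x))" unfolding K_def using finX[OF X] finNb[OF Y] by simp
    also have "\<dots> = (\<Sum>x\<in>X. d)" using degx by simp
    finally show ?thesis unfolding s_def by simp
  qed
  have K2: "K = t * e"
  proof -
    have "{(x, y). x \<in> X \<and> y \<in> Y \<and> (x, y) \<in> E} = (\<lambda>(y,x). (x,y)) ` Sigma Y (Nb X)"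
      unfolding Nb_def using symE by (auto simp: image_iff)
    moreover have "inj_on (\<lambda>(y,x). (x,y)) (Sigma Y (Nb X))" by (auto simp: inj_on_def)
    ultimately have "K = card (Sigma Y (Nb X))" unfolding K_def by (simp add: card_image)
    also have "\<dots> = (\<Sum>y\<in>Y. card (Nb X y))" using finX[OF Y] finNb[OF X] by simp
    also have "\<dots> = (\<Sum>y\<in>Y. e)" using degy by simp
    finally show ?thesis unfolding t_def by simp
  qed
  have d1: "1 \<le> d" using k1 K1 unfolding K_def by (cases d) auto
  have e1: "1 \<le> e" using k1 K2 unfolding K_def by (cases e) auto
  have Amono: "\<forall>i i' j j'. 1 \<le> i' \<and> i' \<le> i \<and> i \<le> s \<and> 1 \<le> j \<and> j \<le> j' \<and> j' \<le> t \<and> A i j \<longrightarrow> A i' j'"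
  proof (intro allI impI)
    fix i i' j j' assume h: "1 \<le> i' \<and> i' \<le> i \<and> i \<le> s \<and> 1 \<le> j \<and> j \<le> j' \<and> j' \<le> t \<and> A i j"
    have "fst (f (xs i')) \<le> fst (f (xs i))" "b * snd (f (xs i')) \<le> b * snd (f (xs i))"
      using mX1[of i' i] mX2[of i' i] h by auto
    moreover have "fst (f (ys j)) \<le> fst (f (ys j'))" "b * snd (f (ys j)) \<le> b * snd (f (ys j'))"
      using mY1[of j j'] mY2[of j j'] h by auto
    ultimately show "A i' j'" using h unfolding A_def by linarith
  qed
  have Bmono: "\<forall>i i' j j'. 1 \<le> i \<and> i \<le> i' \<and> i' \<le> s \<and> 1 \<le> j' \<and> j' \<le> j \<and> j \<le> t \<and> B i j \<longrightarrow> B i' j'"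
  proof (intro allI impI)
    fix i i' j j' assume h: "1 \<le> i \<and> i \<le> i' \<and> i' \<le> s \<and> 1 \<le> j' \<and> j' \<le> j \<and> j \<le> t \<and> B i j"
    have "fst (f (xs i)) \<le> fst (f (xs i'))" "b * snd (f (xs i)) \<le> b * snd (f (xs i'))"
      using mX1[of i i'] mX2[of i i'] h by auto
    moreover have "fst (f (ys j')) \<le> fst (f (ys j))" "b * snd (f (ys j')) \<le> b * snd (f (ys j))"
      using mY1[of j' j] mY2[of j' j] h by auto
    ultimately show "B i' j'" using h unfolding B_def by linarith
  qed
  have degX: "\<forall>i\<in>{1..s}. card {j\<in>{1..t}. A i j \<and> B i j} = d"
  proof
    fix i assume i: "i \<in> {1..s}"
    have "{j\<in>{1..t}. A i j \<and> B i j} = {j\<in>{1..t}. (xs i, ys j) \<in> E}" using adjAB[OF i] by auto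
    also have "card \<dots> = card {y\<in>Y. (xs i, y) \<in> E}"
      using bij_card_filter[OF byy[folded t_def], of "\<lambda>y. (xs i, y) \<in> E"] by simp
    also have "\<dots> = d" using degx[OF xsX[OF i]] unfolding Nb_def .
    finally show "card {j\<in>{1..t}. A i j \<and> B i j} = d" .
  qed
  have degY: "\<forall>j\<in>{1..t}. card {i\<in>{1..s}. A i j \<and> B i j} = e"
  proof
    fix j assume j: "j \<in> {1..t}"
    have "{i\<in>{1..s}. A i j \<and> B i j} = {i\<in>{1..s}. (ys j, xs i) \<in> E}" using adjAB[OF _ j] symE by auto
    also have "card \<dots> = card {x\<in>X. (ys j, x) \<in> E}"
      using bij_card_filter[OF bx[folded s_def], of "\<lambda>x. (ys j, x) \<in> E"] by simp
    also have "\<dots> = e" using degy[OF ysY[OF j]] unfolding Nb_def .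
    finally show "card {i\<in>{1..s}. A i j \<and> B i j} = e" .
  qed
  have blk: "\<forall>i\<in>{1..s}. \<forall>j\<in>{1..t}. (A i j \<and> B i j) \<longleftrightarrow> (i-1) div e = (j-1) div d"
    using block[OF d1 e1 Amono Bmono degX degY] .
  have i': "i \<in> {1..s}" and j': "j \<in> {1..t}" using i j unfolding s_def t_def by auto
  have c1: "real i * real t / real K = real i / real e" using K2 t1 e1 by (simp add: field_simps)
  have c2: "real j * real s / real K = real j / real d" using K1 s1 d1 by (simp add: field_simps)
  have "(xs i, ys j) \<in> E \<longleftrightarrow> (i-1) div e = (j-1) div d" using adjAB[OF i' j'] blk i' j' by simp
  also have "\<dots> \<longleftrightarrow> \<lceil>real i / real e\<rceil> = \<lceil>real j / real d\<rceil>"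
    using ceil_div_nat[of i e] ceil_div_nat[of j d] i' j' d1 e1 by simp
  finally show ?thesis unfolding c1[unfolded t_def K_def] c2[unfolded s_def K_def] .
qed

end

theorem mainTheorem14:
  fixes V :: "'v set" and E :: "('v \<times> 'v) set" and P :: "'v set set"
    and f :: "'v \<Rightarrow> real \<times> real"
  assumes graph: "fin_graph V E"
    and usg: "unit_square_graph V E"
    and tf: "twin_free V E"
    and cs: "clique_stable V E P"
    and rf: "realization V E f"
  shows "(\<forall>X\<in>P. (\<exists>b. oriented f X b) \<and> (card X \<ge> 2 \<longrightarrow> (\<exists>!b. oriented f X b)))
    \<and> (\<forall>X\<in>P. \<forall>Y\<in>P. ori f X \<noteq> ori f Y \<longrightarrow>
          (\<forall>x\<in>X. \<forall>y\<in>Y. (x, y) \<in> E) \<or> (\<forall>x\<in>X. \<forall>y\<in>Y. (x, y) \<notin> E))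
    \<and> (\<forall>X\<in>P. \<forall>Y\<in>P. \<forall>xs ys :: nat \<Rightarrow> 'v.
          X \<noteq> Y \<longrightarrow> ori f X = ori f Y \<longrightarrow>
          card {(x, y). x \<in> X \<and> y \<in> Y \<and> (x, y) \<in> E} \<ge> 1 \<longrightarrow>
          bij_betw xs {1..card X} X \<longrightarrow>
          (\<forall>i. 1 \<le> i \<and> i < card X \<longrightarrow> fst (f (xs i)) \<le> fst (f (xs (i + 1)))) \<longrightarrow>
          bij_betw ys {1..card Y} Y \<longrightarrow>
          (\<forall>j. 1 \<le> j \<and> j < card Y \<longrightarrow> fst (f (ys j)) \<le> fst (f (ys (j + 1)))) \<longrightarrow>
          (\<forall>i\<in>{1..card X}. \<forall>j\<in>{1..card Y}.
             (xs i, ys j) \<in> E \<longleftrightarrow>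
             \<lceil>real i * real (card Y) / real (card {(x, y). x \<in> X \<and> y \<in> Y \<and> (x, y) \<in> E})\<rceil>
             = \<lceil>real j * real (card X) / real (card {(x, y). x \<in> X \<and> y \<in> Y \<and> (x, y) \<in> E})\<rceil>))"
proof -
  interpret setting V E P f using graph tf cs rf by unfold_locales
  have p1: "\<forall>X\<in>P. (\<exists>b. oriented f X b) \<and> (card X \<ge> 2 \<longrightarrow> (\<exists>!b. oriented f X b))"
    using part1 by blast
  have p2: "\<forall>X\<in>P. \<forall>Y\<in>P. ori f X \<noteq> ori f Y \<longrightarrow>
          (\<forall>x\<in>X. \<forall>y\<in>Y. (x, y) \<in> E) \<or> (\<forall>x\<in>X. \<forall>y\<in>Y. (x, y) \<notin> E)"
    using part2 by blast
  have p3: "\<forall>X\<in>P. \<forall>Y\<in>P. \<forall>xs ys :: nat \<Rightarrow> 'v.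
          X \<noteq> Y \<longrightarrow> ori f X = ori f Y \<longrightarrow>
          card {(x, y). x \<in> X \<and> y \<in> Y \<and> (x, y) \<in> E} \<ge> 1 \<longrightarrow>
          bij_betw xs {1..card X} X \<longrightarrow>
          (\<forall>i. 1 \<le> i \<and> i < card X \<longrightarrow> fst (f (xs i)) \<le> fst (f (xs (i + 1)))) \<longrightarrow>
          bij_betw ys {1..card Y} Y \<longrightarrow>
          (\<forall>j. 1 \<le> j \<and> j < card Y \<longrightarrow> fst (f (ys j)) \<le> fst (f (ys (j + 1)))) \<longrightarrow>
          (\<forall>i\<in>{1..card X}. \<forall>j\<in>{1..card Y}.
             (xs i, ys j) \<in> E \<longleftrightarrow>
             \<lceil>real i * real (card Y) / real (card {(x, y). x \<in> X \<and> y \<in> Y \<and> (x, y) \<in> E})\<rceil>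
             = \<lceil>real j * real (card X) / real (card {(x, y). x \<in> X \<and> y \<in> Y \<and> (x, y) \<in> E})\<rceil>)"
    by (intro ballI allI impI) (rule part3; assumption)
  show ?thesis using p1 p2 p3 by blast
qed

end
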